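(* Let $k$ be a field, $A=kQ_A/I_A$ a monomial algebra, and $B$ the algebra obtained from $A$ by gluing a source vertex $e_1$ and a sink vertex $e_n$ of $Q_A$ (distinct, non-isolated). Then $\mathrm{Ker}(\delta^1_A)\cong\mathrm{Ker}(\delta^1_B)$ as Lie algebras, except in the case that $\mathrm{char}(k)=2$ and the gluing produces a block of $B$ isomorphic to $k[x]/(x^2)$.
   Context: Monomial algebra: $A=kQ_A/I_A$, $Q_A$ finite quiver, $I_A$ admissible, generated by a minimal set $Z_A$ of paths of length $\ge2$; $\mathcal B_A$: paths (including trivial ones) avoiding elements of $Z_A$ as subpaths. Source: no incoming arrows; sink: no outgoing arrows. Gluing: $B\subseteq A$ generated by $e_1+e_n$, the other vertex idempotents and all arrows; $B\cong kQ_B/I_B$ with $Q_B$ obtained by identifying $e_1,e_n$ (arrow $\alpha\mapsto\alpha^*$) and $I_B$ generated by the relations of $Z_A$ together with all newly formed length-2 paths through the identified vertex; $Z_B$ the resulting minimal relation set and $\mathcal B_B$ the basis paths of $B$. For path sets $X,Y$, $k(X\|Y)$ has basis the pairs $x\|y$ of parallel paths. For monomial $\Lambda=kQ/\langle Z\rangle$ with basis paths $\mathcal B$, $\delta^1:k(Q_1\|\mathcal B)\to k(Z\|\mathcal B)$, $a\|\gamma\mapsto\sum_{r\in Z}r\|r^{a\|\gamma}$, where $r^{a\|\gamma}$ is the sum over occurrences of $a$ in $r$ of the path obtained by replacing that occurrence by $\gamma$, keeping only paths in $\mathcal B$. $\mathrm{Ker}\,\delta^1$ is a Lie algebra with bracket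 $[a\|\gamma,b\|\epsilon]=b\|\epsilon^{a\|\gamma}-a\|\gamma^{b\|\epsilon}$. $\delta^1_A,\delta^1_B$ denote these for $A,B$. *)

theory Defs
  imports Main "HOL-Library.Sublist"
begin

(* A path is a pair (v, as): start vertex v and arrow list as = [a1,...,am], traversed
   a1 first (so s a1 = v, t ai = s a(i+1)).  (v, []) is the trivial path e_v. *)

definition valid_path :: "'v set \<Rightarrow> 'a set \<Rightarrow> ('a \<Rightarrow> 'v) \<Rightarrow> ('a \<Rightarrow> 'v) \<Rightarrow> 'v \<times> 'a list \<Rightarrow> bool" where
  "valid_path V Ar s t p \<longleftrightarrow>
     fst p \<in> V \<and> set (snd p) \<subseteq> Ar \<and>
     (snd p \<noteq> [] \<longrightarrow> s (hd (snd p)) = fst p) \<and>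
     (\<forall>i. Suc i < length (snd p) \<longrightarrow> t (snd p ! i) = s (snd p ! Suc i))"

definition ptgt :: "('a \<Rightarrow> 'v) \<Rightarrow> 'v \<times> 'a list \<Rightarrow> 'v" where
  "ptgt t p = (if snd p = [] then fst p else t (last (snd p)))"

definition parallel :: "('a \<Rightarrow> 'v) \<Rightarrow> 'v \<times> 'a list \<Rightarrow> 'v \<times> 'a list \<Rightarrow> bool" where
  "parallel t p q \<longleftrightarrow> fst p = fst q \<and> ptgt t p = ptgt t q"

definition arrow_path :: "('a \<Rightarrow> 'v) \<Rightarrow> 'a \<Rightarrow> 'v \<times> 'a list" where
  "arrow_path s a = (s a, [a])"

definition basis_paths :: "'v set \<Rightarrow> 'a set \<Rightarrow> ('a \<Rightarrow> 'v) \<Rightarrow> ('a \<Rightarrow> 'v) \<Rightarrow> ('v \<times> 'a list) set \<Rightarrow> ('v \<times> 'a list) set" where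
  "basis_paths V Ar s t Z = {p. valid_path V Ar s t p \<and> (\<forall>r\<in>Z. \<not> sublist (snd r) (snd p))}"

(* kQ/<Z> is a monomial algebra: Q finite, Z a minimal set of paths of length >= 2,
   and the ideal is admissible (equivalently, finitely many basis paths). *)
definition monomial_pres :: "'v set \<Rightarrow> 'a set \<Rightarrow> ('a \<Rightarrow> 'v) \<Rightarrow> ('a \<Rightarrow> 'v) \<Rightarrow> ('v \<times> 'a list) set \<Rightarrow> bool" where
  "monomial_pres V Ar s t Z \<longleftrightarrow>
     finite V \<and> finite Ar \<and> (\<forall>a\<in>Ar. s a \<in> V \<and> t a \<in> V) \<and>
     (\<forall>r\<in>Z. valid_path V Ar s t r \<and> length (snd r) \<ge> 2) \<and>
     (\<forall>r\<in>Z. \<forall>r'\<in>Z. sublist (snd r') (snd r) \<longrightarrow> r' = r) \<and>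
     finite (basis_paths V Ar s t Z)"

(* basis of k(Q_1 || B): pairs (a, gamma), gamma a basis path parallel to the arrow a *)
definition arrow_pairs :: "'v set \<Rightarrow> 'a set \<Rightarrow> ('a \<Rightarrow> 'v) \<Rightarrow> ('a \<Rightarrow> 'v) \<Rightarrow> ('v \<times> 'a list) set \<Rightarrow> ('a \<times> ('v \<times> 'a list)) set" where
  "arrow_pairs V Ar s t Z = {(a, g). a \<in> Ar \<and> g \<in> basis_paths V Ar s t Z \<and> parallel t (arrow_path s a) g}"

(* elements of k(Q_1 || B), as coefficient functions supported on the basis pairs *)
definition QB_space :: "'v set \<Rightarrow> 'a set \<Rightarrow> ('a \<Rightarrow> 'v) \<Rightarrow> ('a \<Rightarrow> 'v) \<Rightarrow> ('v \<times> 'a list) set \<Rightarrow> ('a \<times> ('v \<times> 'a list) \<Rightarrow> 'k::field) set" where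
  "QB_space V Ar s t Z = {f. \<forall>x. x \<notin> arrow_pairs V Ar s t Z \<longrightarrow> f x = 0}"

definition replace_at :: "'v \<times> 'a list \<Rightarrow> nat \<Rightarrow> 'v \<times> 'a list \<Rightarrow> 'v \<times> 'a list" where
  "replace_at q i g = (fst q, take i (snd q) @ snd g @ drop (Suc i) (snd q))"

(* coefficient of the basis path p in q^{a||g}: number of occurrences of a in q whose
   replacement by g yields p, where only basis paths are kept *)
definition subst_coeff :: "'v set \<Rightarrow> 'a set \<Rightarrow> ('a \<Rightarrow> 'v) \<Rightarrow> ('a \<Rightarrow> 'v) \<Rightarrow> ('v \<times> 'a list) set \<Rightarrow>
    'a \<Rightarrow> 'v \<times> 'a list \<Rightarrow> 'v \<times> 'a list \<Rightarrow> 'v \<times> 'a list \<Rightarrow> 'k::field" where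
  "subst_coeff V Ar s t Z a g q p =
     (if p \<in> basis_paths V Ar s t Z
      then of_nat (card {i. i < length (snd q) \<and> snd q ! i = a \<and> replace_at q i g = p})
      else 0)"

(* delta^1 : k(Q_1||B) -> k(Z||B), result as coefficient function on pairs (r, p) *)
definition delta1 :: "'v set \<Rightarrow> 'a set \<Rightarrow> ('a \<Rightarrow> 'v) \<Rightarrow> ('a \<Rightarrow> 'v) \<Rightarrow> ('v \<times> 'a list) set \<Rightarrow>
    ('a \<times> ('v \<times> 'a list) \<Rightarrow> 'k::field) \<Rightarrow> ('v \<times> 'a list) \<times> ('v \<times> 'a list) \<Rightarrow> 'k" where
  "delta1 V Ar s t Z f = (\<lambda>(r, p).
     if r \<in> Z then (\<Sum>(a, g)\<in>arrow_pairs V Ar s t Z. f (a, g) * subst_coeff V Ar s t Z a g r p) else 0)"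

definition ker_delta1 :: "'v set \<Rightarrow> 'a set \<Rightarrow> ('a \<Rightarrow> 'v) \<Rightarrow> ('a \<Rightarrow> 'v) \<Rightarrow> ('v \<times> 'a list) set \<Rightarrow>
    ('a \<times> ('v \<times> 'a list) \<Rightarrow> 'k::field) set" where
  "ker_delta1 V Ar s t Z = {f \<in> QB_space V Ar s t Z. delta1 V Ar s t Z f = (\<lambda>_. 0)}"

(* bilinear extension of [a||g, b||e] = b||e^{a||g} - a||g^{b||e} *)
definition lie_br :: "'v set \<Rightarrow> 'a set \<Rightarrow> ('a \<Rightarrow> 'v) \<Rightarrow> ('a \<Rightarrow> 'v) \<Rightarrow> ('v \<times> 'a list) set \<Rightarrow>
    ('a \<times> ('v \<times> 'a list) \<Rightarrow> 'k::field) \<Rightarrow> ('a \<times> ('v \<times> 'a list) \<Rightarrow> 'k) \<Rightarrow> ('a \<times> ('v \<times> 'a list) \<Rightarrow> 'k)" where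
  "lie_br V Ar s t Z f h = (\<lambda>(c, p).
     \<Sum>(a, g)\<in>arrow_pairs V Ar s t Z. \<Sum>(b, e)\<in>arrow_pairs V Ar s t Z.
        f (a, g) * h (b, e) *
        ((if b = c then subst_coeff V Ar s t Z a g e p else 0)
         - (if a = c then subst_coeff V Ar s t Z b e g p else 0)))"

definition lie_isomorphic :: "('x \<Rightarrow> 'k::field) set \<Rightarrow> (('x \<Rightarrow> 'k) \<Rightarrow> ('x \<Rightarrow> 'k) \<Rightarrow> ('x \<Rightarrow> 'k)) \<Rightarrow>
    ('y \<Rightarrow> 'k) set \<Rightarrow> (('y \<Rightarrow> 'k) \<Rightarrow> ('y \<Rightarrow> 'k) \<Rightarrow> ('y \<Rightarrow> 'k)) \<Rightarrow> bool" where
  "lie_isomorphic K1 br1 K2 br2 \<longleftrightarrow> (\<exists>\<phi>. bij_betw \<phi> K1 K2 \<and>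
     (\<forall>x\<in>K1. \<forall>y\<in>K1. \<phi> (\<lambda>i. x i + y i) = (\<lambda>j. \<phi> x j + \<phi> y j)) \<and>
     (\<forall>c. \<forall>x\<in>K1. \<phi> (\<lambda>i. c * x i) = (\<lambda>j. c * \<phi> x j)) \<and>
     (\<forall>x\<in>K1. \<forall>y\<in>K1. \<phi> (br1 x y) = br2 (\<phi> x) (\<phi> y)))"

definition glue :: "'v \<Rightarrow> 'v \<Rightarrow> 'v \<Rightarrow> 'v" where
  "glue e1 en v = (if v = en then e1 else v)"

definition glued_V :: "'v set \<Rightarrow> 'v \<Rightarrow> 'v \<Rightarrow> 'v set" where
  "glued_V V e1 en = V - {en}"

(* generators of I_B: relations of Z_A (read in Q_B) together with all newly formed
   length-2 paths through the identified vertex *)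
definition glued_gens :: "'a set \<Rightarrow> ('a \<Rightarrow> 'v) \<Rightarrow> ('a \<Rightarrow> 'v) \<Rightarrow> ('v \<times> 'a list) set \<Rightarrow> 'v \<Rightarrow> 'v \<Rightarrow> ('v \<times> 'a list) set" where
  "glued_gens Ar s t Z e1 en =
     (\<lambda>r. (glue e1 en (fst r), snd r)) ` Z \<union>
     {(glue e1 en (s b), [b, a]) | b a. b \<in> Ar \<and> a \<in> Ar \<and>
        glue e1 en (t b) = e1 \<and> glue e1 en (s a) = e1 \<and> t b \<noteq> s a}"

definition glued_Z :: "'a set \<Rightarrow> ('a \<Rightarrow> 'v) \<Rightarrow> ('a \<Rightarrow> 'v) \<Rightarrow> ('v \<times> 'a list) set \<Rightarrow> 'v \<Rightarrow> 'v \<Rightarrow> ('v \<times> 'a list) set" where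
  "glued_Z Ar s t Z e1 en =
     {r \<in> glued_gens Ar s t Z e1 en. \<forall>r'\<in>glued_gens Ar s t Z e1 en. sublist (snd r') (snd r) \<longrightarrow> snd r' = snd r}"

(* the block of kQ/<Z> containing vertex v is isomorphic to k[x]/(x^2): the connected
   component of v consists of v alone with exactly one arrow x (a loop), and x^2 is a relation *)
definition dual_numbers_block :: "'a set \<Rightarrow> ('a \<Rightarrow> 'v) \<Rightarrow> ('a \<Rightarrow> 'v) \<Rightarrow> ('v \<times> 'a list) set \<Rightarrow> 'v \<Rightarrow> bool" where
  "dual_numbers_block Ar s t Z v \<longleftrightarrow>
     (\<exists>x. {a \<in> Ar. s a = v \<or> t a = v} = {x} \<and> s x = v \<and> t x = v \<and> (v, [x, x]) \<in> Z)"

end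

theory Submission
  imports Defs
begin


lemma sublist_pairD: "sublist [x,y] xs \<Longrightarrow> \<exists>i. Suc i < length xs \<and> xs!i = x \<and> xs!Suc i = y"
proof -
  assume "sublist [x,y] xs"
  then obtain ps ss where "xs = ps @ [x,y] @ ss" unfolding sublist_def by blast
  then show ?thesis by (intro exI[of _ "length ps"]) (simp add: nth_append)
qed

lemma sublist_pairI: "Suc i < length xs \<Longrightarrow> sublist [xs!i, xs!Suc i] xs"
proof -
  assume a: "Suc i < length xs"
  have "xs = take i xs @ [xs!i, xs!Suc i] @ drop (Suc (Suc i)) xs"
    using a by (metis Cons_nth_drop_Suc Suc_lessD append_Cons append_Nil append_take_drop_id)
  then show ?thesis unfolding sublist_def by blast
qed

lemma sublist_len2: "sublist xs [a,b] \<Longrightarrow> length xs \<ge> 2 \<Longrightarrow> xs = [a,b]"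
proof -
  assume "sublist xs [a,b]" "length xs \<ge> 2"
  then obtain ps ss where e: "[a,b] = ps @ xs @ ss" unfolding sublist_def by blast
  then have "length ps + length xs + length ss = 2" by (metis length_append add.assoc length_Cons list.size(3) One_nat_def Suc_1 plus_1_eq_Suc add_0 numeral_2_eq_2)
  then have "length ps = 0 \<and> length ss = 0" using \<open>length xs \<ge> 2\<close> by linarith
  then have "ps = [] \<and> ss = []" by simp
  then show ?thesis using e by simp
qed

lemma valid_consec: "valid_path V Ar s t p \<Longrightarrow> sublist [x,y] (snd p) \<Longrightarrow> t x = s y"
  unfolding valid_path_def by (metis sublist_pairD)

locale gsetup =
  fixes V :: "'v set" and Ar :: "'a set" and s t :: "'a \<Rightarrow> 'v"
    and Z :: "('v \<times> 'a list) set" and e1 en :: 'v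
  assumes mono: "monomial_pres V Ar s t Z"
    and e1V: "e1 \<in> V" and enV: "en \<in> V" and dist: "e1 \<noteq> en"
    and source: "\<forall>a\<in>Ar. t a \<noteq> e1"
    and sink: "\<forall>a\<in>Ar. s a \<noteq> en"
begin

abbreviation "gl \<equiv> glue e1 en"
abbreviation "VB \<equiv> glued_V V e1 en"
abbreviation "sB \<equiv> glue e1 en \<circ> s"
abbreviation "tB \<equiv> glue e1 en \<circ> t"
abbreviation "ZB \<equiv> glued_Z Ar s t Z e1 en"
abbreviation "GB \<equiv> glued_gens Ar s t Z e1 en"
abbreviation "bA \<equiv> basis_paths V Ar s t Z"
abbreviation "bB \<equiv> basis_paths VB Ar sB tB ZB"
abbreviation "pA \<equiv> arrow_pairs V Ar s t Z"
abbreviation "pB \<equiv> arrow_pairs VB Ar sB tB ZB"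

lemma glue_simp[simp]: "glue e1 en v = (if v = en then e1 else v)"
  by (simp add: glue_def)

lemma Z_valid: "r \<in> Z \<Longrightarrow> valid_path V Ar s t r \<and> length (snd r) \<ge> 2"
  using mono unfolding monomial_pres_def by blast

lemma Z_min: "r \<in> Z \<Longrightarrow> r' \<in> Z \<Longrightarrow> sublist (snd r') (snd r) \<Longrightarrow> r' = r"
  using mono unfolding monomial_pres_def by blast

lemma Z_fst: "r \<in> Z \<Longrightarrow> fst r \<noteq> en"
proof -
  assume r: "r \<in> Z"
  then have v: "valid_path V Ar s t r" and l: "length (snd r) \<ge> 2" using Z_valid by auto
  then have ne: "snd r \<noteq> []" by auto
  then have "s (hd (snd r)) = fst r" "hd (snd r) \<in> Ar" using v unfolding valid_path_def by auto
  then show ?thesis using sink by metis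
qed

lemma GB_len: "r \<in> GB \<Longrightarrow> length (snd r) \<ge> 2"
  unfolding glued_gens_def using Z_valid by auto

lemma ZB_GB: "r \<in> ZB \<Longrightarrow> r \<in> GB"
  unfolding glued_Z_def by auto

lemma ZB_len: "r \<in> ZB \<Longrightarrow> length (snd r) \<ge> 2"
  using GB_len ZB_GB by blast

lemma new_not_sub: "valid_path V Ar s t p \<Longrightarrow> t b = en \<Longrightarrow> s a = e1 \<Longrightarrow> \<not> sublist [b,a] (snd p)"
  using valid_consec dist by metis

lemma Z_in_ZB: "r \<in> Z \<Longrightarrow> r \<in> ZB"
proof -
  assume r: "r \<in> Z"
  have f: "fst r \<noteq> en" using Z_fst r by blast
  have g: "r \<in> GB" unfolding glued_gens_def using r f
    by (intro UnI1 image_eqI[of _ _ r]) auto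
  have "snd r' = snd r" if r': "r' \<in> GB" "sublist (snd r') (snd r)" for r'
  proof -
    from r'(1) consider (a) r0 where "r0 \<in> Z" "r' = (gl (fst r0), snd r0)"
      | (b) b a where "b \<in> Ar" "a \<in> Ar" "gl (t b) = e1" "gl (s a) = e1" "t b \<noteq> s a" "r' = (gl (s b), [b,a])"
      unfolding glued_gens_def by blast
    then show ?thesis
    proof cases
      case a
      then show ?thesis using Z_min[OF r a(1)] r'(2) by auto
    next
      case b
      have "t b = s a" using valid_consec[of V Ar s t r b a] r'(2) b(6) Z_valid[OF r] by simp
      then show ?thesis using b(5) by blast
    qed
  qed
  then show ?thesis unfolding glued_Z_def using g by blast
qed

lemma new_in_ZB: "b \<in> Ar \<Longrightarrow> a \<in> Ar \<Longrightarrow> t b = en \<Longrightarrow> s a = e1 \<Longrightarrow> (s b, [b,a]) \<in> ZB"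
proof -
  assume h: "b \<in> Ar" "a \<in> Ar" "t b = en" "s a = e1"
  have sb: "s b \<noteq> en" using sink h by blast
  have g: "(s b, [b,a]) \<in> GB" unfolding glued_gens_def using h sb dist
    by (intro UnI2) (auto intro!: exI[of _ b] exI[of _ a])
  show ?thesis unfolding glued_Z_def
  proof (intro CollectI conjI ballI impI g)
    fix r' assume r': "r' \<in> GB" "sublist (snd r') (snd (s b, [b,a]))"
    have "length (snd r') \<ge> 2" using GB_len r'(1) by blast
    then show "snd r' = snd (s b, [b,a])" using sublist_len2[of "snd r'" b a] r'(2) by simp
  qed
qed

lemma ZB_cases: "r \<in> ZB \<Longrightarrow> r \<in> Z \<or> (\<exists>b a. b \<in> Ar \<and> a \<in> Ar \<and> t b = en \<and> s a = e1 \<and> r = (s b, [b,a]))"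
proof -
  assume "r \<in> ZB"
  then have "r \<in> GB" by (rule ZB_GB)
  then consider (a) r0 where "r0 \<in> Z" "r = (gl (fst r0), snd r0)"
      | (b) b a where "b \<in> Ar" "a \<in> Ar" "gl (t b) = e1" "gl (s a) = e1" "t b \<noteq> s a" "r = (gl (s b), [b,a])"
      unfolding glued_gens_def by blast
  then show ?thesis
  proof cases
    case a
    then show ?thesis using Z_fst[OF a(1)] by simp
  next
    case b
    then show ?thesis using source sink by (auto split: if_splits)
  qed
qed

lemma bB_sub: "bB \<subseteq> bA"
proof
  fix p assume p: "p \<in> bB"
  then have v: "valid_path VB Ar sB tB p" and nz: "\<forall>r\<in>ZB. \<not> sublist (snd r) (snd p)"
    unfolding basis_paths_def by auto
  have "valid_path V Ar s t p"
    unfolding valid_path_def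
  proof (intro conjI allI impI)
    show "fst p \<in> V" using v unfolding valid_path_def glued_V_def by auto
    show ar: "set (snd p) \<subseteq> Ar" using v unfolding valid_path_def by auto
    show "s (hd (snd p)) = fst p" if "snd p \<noteq> []"
    proof -
      have "hd (snd p) \<in> Ar" using ar that by auto
      then show ?thesis using v that sink unfolding valid_path_def by (auto split: if_splits)
    qed
    fix i assume i: "Suc i < length (snd p)"
    let ?x = "snd p ! i" and ?y = "snd p ! Suc i"
    have xA: "?x \<in> Ar" "?y \<in> Ar" using ar i by auto
    have eq: "gl (t ?x) = gl (s ?y)" using v i unfolding valid_path_def by auto
    show "t ?x = s ?y"
    proof (rule ccontr)
      assume ne: "t ?x \<noteq> s ?y"
      then have "t ?x = en" "s ?y = e1" using eq xA source sink by (auto split: if_splits)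
      then have "(s ?x, [?x, ?y]) \<in> ZB" using new_in_ZB xA by blast
      then show False using nz sublist_pairI[OF i] by auto
    qed
  qed
  moreover have "\<forall>r\<in>Z. \<not> sublist (snd r) (snd p)" using nz Z_in_ZB by blast
  ultimately show "p \<in> bA" unfolding basis_paths_def by blast
qed

lemma bA_B: "p \<in> bA \<Longrightarrow> fst p \<noteq> en \<Longrightarrow> p \<in> bB"
proof -
  assume p: "p \<in> bA" and f: "fst p \<noteq> en"
  then have v: "valid_path V Ar s t p" and nz: "\<forall>r\<in>Z. \<not> sublist (snd r) (snd p)"
    unfolding basis_paths_def by auto
  have "valid_path VB Ar sB tB p"
    using v f unfolding valid_path_def glued_V_def by auto
  moreover have "\<forall>r\<in>ZB. \<not> sublist (snd r) (snd p)"
    using ZB_cases nz new_not_sub[OF v] by fastforce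
  ultimately show ?thesis unfolding basis_paths_def by blast
qed

lemma basis_iff: "fst p \<noteq> en \<Longrightarrow> p \<in> bB \<longleftrightarrow> p \<in> bA"
  using bA_B bB_sub by blast


lemma ptgt_gl: "fst g \<noteq> en \<Longrightarrow> ptgt tB g = gl (ptgt t g)"
  unfolding ptgt_def by simp

lemma pA_info: "(a,g) \<in> pA \<Longrightarrow> a \<in> Ar \<and> g \<in> bA \<and> fst g = s a \<and> ptgt t g = t a \<and> fst g \<noteq> en"
proof -
  assume h: "(a,g) \<in> pA"
  then have "a \<in> Ar \<and> g \<in> bA \<and> fst g = s a \<and> ptgt t g = t a"
    unfolding arrow_pairs_def parallel_def arrow_path_def ptgt_def by auto
  moreover have "s a \<noteq> en" using calculation sink by blast
  ultimately show ?thesis by simp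
qed

lemma pB_info: "(a,g) \<in> pB \<Longrightarrow> a \<in> Ar \<and> g \<in> bB \<and> fst g = gl (s a) \<and> ptgt tB g = gl (t a)"
  unfolding arrow_pairs_def parallel_def arrow_path_def ptgt_def by auto

lemma pA_sub: "pA \<subseteq> pB"
proof
  fix x assume x: "x \<in> pA"
  obtain a g where xe: "x = (a,g)" by (cases x)
  have "(a,g) \<in> pA" using x xe by simp
  note pi = pA_info[OF this]
  have i: "a \<in> Ar" "g \<in> bA" "fst g = s a" "ptgt t g = t a" "fst g \<noteq> en" using pi by auto
  have "g \<in> bB" using bA_B i by blast
  moreover have "parallel tB (arrow_path sB a) g"
    unfolding parallel_def arrow_path_def using i ptgt_gl[of g, OF i(5)]
    by (simp add: ptgt_def)
  ultimately show "x \<in> pB" unfolding arrow_pairs_def xe using i by blast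
qed

lemma pB_new: "(c,g) \<in> pB \<Longrightarrow> (c,g) \<notin> pA \<Longrightarrow> g = (e1,[]) \<and> s c = e1 \<and> t c = en \<and> c \<in> Ar"
proof -
  assume x: "(c,g) \<in> pB" and nx: "(c,g) \<notin> pA"
  have i: "c \<in> Ar" "g \<in> bB" "fst g = gl (s c)" "ptgt tB g = gl (t c)" using pB_info[OF x] by auto
  have gA: "g \<in> bA" using i bB_sub by blast
  have sc: "s c \<noteq> en" using sink i by blast
  have f: "fst g = s c" using i sc by simp
  have vg: "valid_path V Ar s t g" using gA unfolding basis_paths_def by blast
  have ne: "ptgt t g \<noteq> t c"
  proof
    assume "ptgt t g = t c"
    then have "(c,g) \<in> pA" unfolding arrow_pairs_def parallel_def arrow_path_def using i gA f
      by (simp add: ptgt_def)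
    then show False using nx by blast
  qed
  have eq: "gl (ptgt t g) = gl (t c)" using i ptgt_gl[of g] f sc by simp
  have tc: "t c = en" "ptgt t g = e1" using ne eq source i(1) by (auto split: if_splits)
  have sg: "snd g = []"
  proof (rule ccontr)
    assume "snd g \<noteq> []"
    then have "last (snd g) \<in> Ar" "t (last (snd g)) = e1" using vg tc(2) unfolding valid_path_def ptgt_def by auto
    then show False using source by blast
  qed
  then have "fst g = e1" using tc(2) unfolding ptgt_def by simp
  then show ?thesis using sg f tc i(1) by (metis prod.collapse)
qed

lemma short_avoid: "length xs < 2 \<Longrightarrow> \<forall>r\<in>Z. \<not> sublist (snd r) xs"
  using Z_valid sublist_length_le by fastforce

lemma new_pB: "c \<in> Ar \<Longrightarrow> s c = e1 \<Longrightarrow> t c = en \<Longrightarrow> (c,(e1,[])) \<in> pB"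
proof -
  assume h: "c \<in> Ar" "s c = e1" "t c = en"
  have "(e1,[]) \<in> bA" unfolding basis_paths_def valid_path_def using e1V short_avoid[of "[]"]
    by auto
  then have "(e1,[]) \<in> bB" using bA_B dist by auto
  then show ?thesis unfolding arrow_pairs_def parallel_def arrow_path_def ptgt_def using h dist by auto
qed

lemma single_bB: "a \<in> Ar \<Longrightarrow> (s a, [a]) \<in> bB"
proof -
  assume h: "a \<in> Ar"
  have sV: "s a \<in> V" using mono h unfolding monomial_pres_def by blast
  have "(s a,[a]) \<in> bA" unfolding basis_paths_def valid_path_def using sV h short_avoid[of "[a]"]
    by auto
  then show ?thesis using bA_B sink h by auto
qed

lemma finite_bA: "finite bA"
  using mono unfolding monomial_pres_def by blast

lemma finite_pB: "finite pB"
proof -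
  have "pB \<subseteq> Ar \<times> bB" unfolding arrow_pairs_def by auto
  moreover have "finite (Ar \<times> bB)" using mono finite_bA bB_sub finite_subset
    unfolding monomial_pres_def by blast
  ultimately show ?thesis using finite_subset by blast
qed

lemma SC: "fst q \<noteq> en \<Longrightarrow> subst_coeff VB Ar sB tB ZB a g q p = (subst_coeff V Ar s t Z a g q p :: 'k::field)"
proof -
  assume fq: "fst q \<noteq> en"
  let ?S = "{i. i < length (snd q) \<and> snd q ! i = a \<and> replace_at q i g = p}"
  show ?thesis
  proof (cases "?S = {}")
    case True
    have c0: "card ?S = 0" by (simp only: True card.empty)
    show ?thesis unfolding subst_coeff_def c0 by simp
  next
    case False
    then obtain i where "replace_at q i g = p" by blast
    then have "fst p = fst q" unfolding replace_at_def by auto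
    then have "p \<in> bB \<longleftrightarrow> p \<in> bA" using basis_iff fq by simp
    then show ?thesis unfolding subst_coeff_def by simp
  qed
qed

lemma sublist_last: "xs \<noteq> [] \<Longrightarrow> sublist [last xs, a] (xs @ [a])"
proof -
  assume "xs \<noteq> []"
  then have "xs @ [a] = butlast xs @ [last xs, a] @ []" by simp
  then show ?thesis unfolding sublist_def by blast
qed

lemma sublist_hd: "xs \<noteq> [] \<Longrightarrow> sublist [b, hd xs] (b # xs)"
proof -
  assume "xs \<noteq> []"
  then have "b # xs = [] @ [b, hd xs] @ tl xs" by simp
  then show ?thesis unfolding sublist_def by blast
qed

lemma L4: "b \<in> Ar \<Longrightarrow> a \<in> Ar \<Longrightarrow> t b = en \<Longrightarrow> s a = e1 \<Longrightarrow> (c,g) \<in> pA \<Longrightarrow>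
   subst_coeff VB Ar sB tB ZB c g (s b,[b,a]) p = (0::'k::field)"
proof -
  assume h: "b \<in> Ar" "a \<in> Ar" "t b = en" "s a = e1" and cg: "(c,g) \<in> pA"
  have gi: "c \<in> Ar" "g \<in> bA" "fst g = s c" "ptgt t g = t c" "fst g \<noteq> en" using pA_info[OF cg] by auto
  have vg: "valid_path V Ar s t g" using gi unfolding basis_paths_def by blast
  let ?S = "{i. i < length (snd (s b,[b,a])) \<and> snd (s b,[b,a]) ! i = c \<and> replace_at (s b,[b,a]) i g = p}"
  have nb: "p \<notin> bB" if "i \<in> ?S" for i
  proof -
    have i2: "i < 2" "[b,a] ! i = c" "replace_at (s b,[b,a]) i g = p" using that by auto
    then consider "i = 0" | "i = 1" by linarith
    then show ?thesis
    proof cases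
      case 1
      then have cb: "c = b" and pe: "p = (s b, snd g @ [a])" using i2 unfolding replace_at_def by auto
      have ne: "snd g \<noteq> []"
      proof
        assume "snd g = []"
        then have "fst g = t b" using gi cb unfolding ptgt_def by simp
        then show False using gi cb h sink by simp
      qed
      have l: "last (snd g) \<in> Ar" "t (last (snd g)) = en"
        using ne vg gi cb h unfolding valid_path_def ptgt_def by auto
      have "(s (last (snd g)), [last (snd g), a]) \<in> ZB" using new_in_ZB l h by blast
      then show ?thesis using sublist_last[OF ne, of a] pe unfolding basis_paths_def by force
    next
      case 2
      then have ca: "c = a" and pe: "p = (s b, b # snd g)" using i2 unfolding replace_at_def by auto
      have ne: "snd g \<noteq> []"
      proof
        assume "snd g = []"
        then have "fst g = t a" using gi ca unfolding ptgt_def by simp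
        then have "t a = e1" using gi ca h by simp
        then show False using source h(2) by blast
      qed
      have l: "hd (snd g) \<in> Ar" "s (hd (snd g)) = e1"
        using ne vg gi ca h unfolding valid_path_def by auto
      have "(s b, [b, hd (snd g)]) \<in> ZB" using new_in_ZB l h by blast
      then show ?thesis using sublist_hd[OF ne, of b] pe unfolding basis_paths_def by force
    qed
  qed
  show ?thesis
  proof (cases "p \<in> bB")
    case True
    then have "?S = {}" using nb by blast
    then have c0: "card ?S = 0" by (simp only: card.empty)
    show ?thesis unfolding subst_coeff_def c0 by simp
  next
    case False
    then show ?thesis unfolding subst_coeff_def by simp
  qed
qed


lemma QB_zero: "f \<in> QB_space V Ar s t Z \<Longrightarrow> x \<notin> pA \<Longrightarrow> f x = 0"
  unfolding QB_space_def by blast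

lemma delta_eq:
  fixes f :: "'a \<times> ('v \<times> 'a list) \<Rightarrow> 'k::field"
  assumes f: "f \<in> QB_space V Ar s t Z"
  shows "delta1 VB Ar sB tB ZB f = delta1 V Ar s t Z f"
proof (rule ext)
  fix x :: "('v \<times> 'a list) \<times> ('v \<times> 'a list)"
  obtain r p where xe: "x = (r,p)" by (cases x)
  show "delta1 VB Ar sB tB ZB f x = delta1 V Ar s t Z f x"
  proof (cases "r \<in> Z")
    case True
    then have rB: "r \<in> ZB" using Z_in_ZB by blast
    have fr: "fst r \<noteq> en" using Z_fst True by blast
    have "(\<Sum>(a, g)\<in>pB. f (a, g) * subst_coeff VB Ar sB tB ZB a g r p)
        = (\<Sum>(a, g)\<in>pA. f (a, g) * subst_coeff VB Ar sB tB ZB a g r p)"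
      by (rule sum.mono_neutral_right[OF finite_pB pA_sub]) (auto simp: QB_zero[OF f])
    also have "\<dots> = (\<Sum>(a, g)\<in>pA. f (a, g) * subst_coeff V Ar s t Z a g r p)"
      by (rule sum.cong[OF refl]) (auto simp: SC[OF fr])
    finally show ?thesis unfolding delta1_def xe using True rB by simp
  next
    case False
    show ?thesis
    proof (cases "r \<in> ZB")
      case True
      then obtain b a where h: "b \<in> Ar" "a \<in> Ar" "t b = en" "s a = e1" "r = (s b, [b,a])"
        using ZB_cases False by blast
      have "(\<Sum>(c, g)\<in>pB. f (c, g) * subst_coeff VB Ar sB tB ZB c g r p) = 0"
      proof (rule sum.neutral, clarify)
        fix c g assume "(c,g) \<in> pB"
        show "f (c, g) * subst_coeff VB Ar sB tB ZB c g r p = 0"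
        proof (cases "(c,g) \<in> pA")
          case True
          have "subst_coeff VB Ar sB tB ZB c g (s b, [b, a]) p = (0::'k)" by (rule L4[OF h(1-4) True])
          then show ?thesis using h(5) by simp
        next
          case False
          then show ?thesis using QB_zero[OF f False] by simp
        qed
      qed
      then show ?thesis unfolding delta1_def xe using True False by simp
    next
      case F2: False
      then show ?thesis unfolding delta1_def xe using False by simp
    qed
  qed
qed

lemma br_eq:
  fixes f h :: "'a \<times> ('v \<times> 'a list) \<Rightarrow> 'k::field"
  assumes f: "f \<in> QB_space V Ar s t Z" and h: "h \<in> QB_space V Ar s t Z"
  shows "lie_br VB Ar sB tB ZB f h = lie_br V Ar s t Z f h"
proof (rule ext)
  fix x :: "'a \<times> ('v \<times> 'a list)"
  obtain c p where xe: "x = (c,p)" by (cases x)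
  have "(\<Sum>(a, g)\<in>pB. \<Sum>(b, e)\<in>pB. f (a, g) * h (b, e) *
        ((if b = c then subst_coeff VB Ar sB tB ZB a g e p else 0)
         - (if a = c then subst_coeff VB Ar sB tB ZB b e g p else 0)))
     = (\<Sum>(a, g)\<in>pA. \<Sum>(b, e)\<in>pB. f (a, g) * h (b, e) *
        ((if b = c then subst_coeff VB Ar sB tB ZB a g e p else 0)
         - (if a = c then subst_coeff VB Ar sB tB ZB b e g p else 0)))"
    by (rule sum.mono_neutral_right[OF finite_pB pA_sub]) (auto simp: QB_zero[OF f])
  also have "\<dots> = (\<Sum>(a, g)\<in>pA. \<Sum>(b, e)\<in>pA. f (a, g) * h (b, e) *
        ((if b = c then subst_coeff VB Ar sB tB ZB a g e p else 0)
         - (if a = c then subst_coeff VB Ar sB tB ZB b e g p else 0)))"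
    by (rule sum.cong[OF refl], clarify, rule sum.mono_neutral_right[OF finite_pB pA_sub])
       (auto simp: QB_zero[OF h])
  also have "\<dots> = (\<Sum>(a, g)\<in>pA. \<Sum>(b, e)\<in>pA. f (a, g) * h (b, e) *
        ((if b = c then subst_coeff V Ar s t Z a g e p else 0)
         - (if a = c then subst_coeff V Ar s t Z b e g p else 0)))"
  proof (rule sum.cong[OF refl], clarify, rule sum.cong[OF refl], clarify)
    fix a g b e assume ag: "(a,g) \<in> pA" and be: "(b,e) \<in> pA"
    have "fst g \<noteq> en" "fst e \<noteq> en" using pA_info[OF ag] pA_info[OF be] by auto
    then show "f (a, g) * h (b, e) *
        ((if b = c then subst_coeff VB Ar sB tB ZB a g e p else 0)
         - (if a = c then subst_coeff VB Ar sB tB ZB b e g p else 0)) =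
        f (a, g) * h (b, e) *
        ((if b = c then subst_coeff V Ar s t Z a g e p else 0)
         - (if a = c then subst_coeff V Ar s t Z b e g p else 0))"
      by (simp add: SC)
  qed
  finally show "lie_br VB Ar sB tB ZB f h x = lie_br V Ar s t Z f h x"
    unfolding lie_br_def xe by simp
qed

lemma delta_single:
  fixes f :: "'a \<times> ('v \<times> 'a list) \<Rightarrow> 'k::field"
  assumes r: "r \<in> ZB" and x0: "(c0,g0) \<in> pB"
    and oth: "\<And>c g i. (c,g) \<in> pB \<Longrightarrow> i < length (snd r) \<Longrightarrow> snd r ! i = c \<Longrightarrow> replace_at r i g = p \<Longrightarrow> c = c0 \<and> g = g0"
  shows "delta1 VB Ar sB tB ZB f (r,p) = f (c0,g0) * subst_coeff VB Ar sB tB ZB c0 g0 r p"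
proof -
  have z: "subst_coeff VB Ar sB tB ZB c g r p = (0::'k)" if "(c,g) \<in> pB" "(c,g) \<noteq> (c0,g0)" for c g
  proof -
    let ?S = "{i. i < length (snd r) \<and> snd r ! i = c \<and> replace_at r i g = p}"
    have "?S = {}" using oth that by blast
    then have c0: "card ?S = 0" by (simp only: card.empty)
    show ?thesis unfolding subst_coeff_def c0 by simp
  qed
  have "(\<Sum>(c, g)\<in>pB. f (c, g) * subst_coeff VB Ar sB tB ZB c g r p)
      = (\<Sum>(c, g)\<in>{(c0,g0)}. f (c, g) * subst_coeff VB Ar sB tB ZB c g r p)"
  proof (rule sum.mono_neutral_right[OF finite_pB])
    show "{(c0,g0)} \<subseteq> pB" using x0 by simp
    show "\<forall>x\<in>pB - {(c0,g0)}. (case x of (c, g) \<Rightarrow> f (c, g) * subst_coeff VB Ar sB tB ZB c g r p) = 0"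
    proof
      fix x assume x: "x \<in> pB - {(c0,g0)}"
      obtain c g where xe: "x = (c,g)" by (cases x)
      have "subst_coeff VB Ar sB tB ZB c g r p = (0::'k)" using z x xe by blast
      then show "(case x of (c, g) \<Rightarrow> f (c, g) * subst_coeff VB Ar sB tB ZB c g r p) = 0" using xe by simp
    qed
  qed
  then show ?thesis unfolding delta1_def using r by simp
qed

lemma L5:
  fixes f :: "'a \<times> ('v \<times> 'a list) \<Rightarrow> 'k::field"
  assumes f: "f \<in> ker_delta1 VB Ar sB tB ZB" and c: "c \<in> Ar" "s c = e1" "t c = en"
    and ne: "\<not> (CHAR('k) = 2 \<and> dual_numbers_block Ar sB tB ZB e1)"
  shows "f (c,(e1,[])) = 0"
proof -
  have d0: "delta1 VB Ar sB tB ZB f x = 0" for x using f unfolding ker_delta1_def by auto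
  have x0: "(c,(e1,[])) \<in> pB" using new_pB c by blast
  have triv: "g = (e1,[])" if "(c,g) \<in> pB" "snd g = []" for g
  proof -
    have "fst g = e1" using pB_info[OF that(1)] c dist by simp
    then show ?thesis using that(2) by (metis prod.collapse)
  qed
  show ?thesis
  proof (cases "\<exists>c'\<in>Ar. c' \<noteq> c \<and> (s c' = e1 \<or> t c' = en)")
    case True
    then obtain c' where c': "c' \<in> Ar" "c' \<noteq> c" "s c' = e1 \<or> t c' = en" by blast
    show ?thesis
    proof (cases "s c' = e1")
      case True
      have r: "(e1, [c,c']) \<in> ZB" using new_in_ZB[OF c(1) c'(1) c(3) True] c by simp
      have "delta1 VB Ar sB tB ZB f ((e1,[c,c']),(e1,[c'])) = f (c,(e1,[])) * subst_coeff VB Ar sB tB ZB c (e1,[]) (e1,[c,c']) (e1,[c'])"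
      proof (rule delta_single[OF r x0])
        fix c'' g i assume h: "(c'',g) \<in> pB" "i < length (snd (e1,[c,c']))" "snd (e1,[c,c']) ! i = c''"
          "replace_at (e1,[c,c']) i g = (e1,[c'])"
        then consider "i = 0" | "i = 1" by fastforce
        then show "c'' = c \<and> g = (e1,[])"
        proof cases
          case 1 then show ?thesis using h triv unfolding replace_at_def by auto
        next
          case 2 then show ?thesis using h c'(2) unfolding replace_at_def by auto
        qed
      qed
      moreover have "subst_coeff VB Ar sB tB ZB c (e1,[]) (e1,[c,c']) (e1,[c']) = (1::'k)"
      proof -
        have "{i. i < length (snd (e1,[c,c'])) \<and> snd (e1,[c,c']) ! i = c \<and> replace_at (e1,[c,c']) i (e1,[]) = (e1,[c'])} = {0}"
          using c'(2) unfolding replace_at_def by (auto simp: less_Suc_eq)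
        moreover have "(e1,[c']) \<in> bB" using single_bB[OF c'(1)] True by simp
        ultimately show ?thesis unfolding subst_coeff_def by simp
      qed
      ultimately show ?thesis using d0 by simp
    next
      case False
      then have tc': "t c' = en" using c' by blast
      have sc': "s c' \<noteq> en" using sink c' by blast
      have r: "(s c', [c',c]) \<in> ZB" using new_in_ZB[OF c'(1) c(1) tc' c(2)] by simp
      have "delta1 VB Ar sB tB ZB f ((s c',[c',c]),(s c',[c'])) = f (c,(e1,[])) * subst_coeff VB Ar sB tB ZB c (e1,[]) (s c',[c',c]) (s c',[c'])"
      proof (rule delta_single[OF r x0])
        fix c'' g i assume h: "(c'',g) \<in> pB" "i < length (snd (s c',[c',c]))" "snd (s c',[c',c]) ! i = c''"
          "replace_at (s c',[c',c]) i g = (s c',[c'])"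
        then consider "i = 0" | "i = 1" by fastforce
        then show "c'' = c \<and> g = (e1,[])"
        proof cases
          case 1 then show ?thesis using h c'(2) unfolding replace_at_def by auto
        next
          case 2 then show ?thesis using h triv unfolding replace_at_def by auto
        qed
      qed
      moreover have "subst_coeff VB Ar sB tB ZB c (e1,[]) (s c',[c',c]) (s c',[c']) = (1::'k)"
      proof -
        have "{i. i < length (snd (s c',[c',c])) \<and> snd (s c',[c',c]) ! i = c \<and> replace_at (s c',[c',c]) i (e1,[]) = (s c',[c'])} = {1}"
          using c'(2) unfolding replace_at_def by (auto simp: less_Suc_eq)
        moreover have "(s c',[c']) \<in> bB" using single_bB[OF c'(1)] by simp
        ultimately show ?thesis unfolding subst_coeff_def by simp
      qed
      ultimately show ?thesis using d0 by simp
    qed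
  next
    case False
    have r: "(e1, [c,c]) \<in> ZB" using new_in_ZB[OF c(1) c(1) c(3) c(2)] c by simp
    have ch: "CHAR('k) \<noteq> 2"
    proof
      assume "CHAR('k) = 2"
      moreover have "dual_numbers_block Ar sB tB ZB e1"
        unfolding dual_numbers_block_def
      proof (intro exI[of _ c] conjI)
        show "{a \<in> Ar. sB a = e1 \<or> tB a = e1} = {c}"
          using False c source sink dist by (auto split: if_splits)
        show "sB c = e1" "tB c = e1" using c by auto
        show "(e1,[c,c]) \<in> ZB" by (rule r)
      qed
      ultimately show False using ne by blast
    qed
    have two: "(of_nat 2 :: 'k) \<noteq> 0"
    proof
      assume "(of_nat 2 :: 'k) = 0"
      then have "CHAR('k) dvd 2" by (simp only: of_nat_eq_0_iff_char_dvd)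
      then have "CHAR('k) \<in> {1,2}" using dvd_imp_le[of "CHAR('k)" 2] by (auto simp: le_Suc_eq numeral_2_eq_2 dest: dvd_imp_le)
      then show False using ch CHAR_not_1[where 'a='k] by auto
    qed
    have "delta1 VB Ar sB tB ZB f ((e1,[c,c]),(e1,[c])) = f (c,(e1,[])) * subst_coeff VB Ar sB tB ZB c (e1,[]) (e1,[c,c]) (e1,[c])"
    proof (rule delta_single[OF r x0])
      fix c'' g i assume h: "(c'',g) \<in> pB" "i < length (snd (e1,[c,c]))" "snd (e1,[c,c]) ! i = c''"
        "replace_at (e1,[c,c]) i g = (e1,[c])"
      then consider "i = 0" | "i = 1" by fastforce
      then show "c'' = c \<and> g = (e1,[])"
      proof cases
        case 1 then show ?thesis using h triv unfolding replace_at_def by auto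
      next
        case 2 then show ?thesis using h triv unfolding replace_at_def by auto
      qed
    qed
    moreover have "subst_coeff VB Ar sB tB ZB c (e1,[]) (e1,[c,c]) (e1,[c]) = (of_nat 2::'k)"
    proof -
      have "{i. i < length (snd (e1,[c,c])) \<and> snd (e1,[c,c]) ! i = c \<and> replace_at (e1,[c,c]) i (e1,[]) = (e1,[c])} = {0,1}"
        unfolding replace_at_def by (auto simp: less_Suc_eq)
      moreover have "(e1,[c]) \<in> bB" using single_bB[OF c(1)] c by simp
      ultimately show ?thesis unfolding subst_coeff_def by simp
    qed
    ultimately show ?thesis using d0 two by simp
  qed
qed

end


theorem corollary3p18:
  fixes V :: "'v set" and Ar :: "'a set" and s t :: "'a \<Rightarrow> 'v"
    and Z :: "('v \<times> 'a list) set" and e1 en :: 'v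
  assumes mono: "monomial_pres V Ar s t Z"
    and e1V: "e1 \<in> V" and enV: "en \<in> V" and dist: "e1 \<noteq> en"
    and source: "\<forall>a\<in>Ar. t a \<noteq> e1"
    and sink: "\<forall>a\<in>Ar. s a \<noteq> en"
    and e1_not_isolated: "\<exists>a\<in>Ar. s a = e1"
    and en_not_isolated: "\<exists>a\<in>Ar. t a = en"
    and not_exc: "\<not> (CHAR('k::field) = 2 \<and>
        dual_numbers_block Ar (glue e1 en \<circ> s) (glue e1 en \<circ> t) (glued_Z Ar s t Z e1 en) e1)"
  shows "lie_isomorphic
     (ker_delta1 V Ar s t Z :: ('a \<times> ('v \<times> 'a list) \<Rightarrow> 'k) set) (lie_br V Ar s t Z)
     (ker_delta1 (glued_V V e1 en) Ar (glue e1 en \<circ> s) (glue e1 en \<circ> t) (glued_Z Ar s t Z e1 en))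
     (lie_br (glued_V V e1 en) Ar (glue e1 en \<circ> s) (glue e1 en \<circ> t) (glued_Z Ar s t Z e1 en))"
  proof -
  interpret gsetup V Ar s t Z e1 en
    using mono e1V enV dist source sink by unfold_locales
  have K: "ker_delta1 V Ar s t Z = (ker_delta1 VB Ar sB tB ZB :: ('a \<times> ('v \<times> 'a list) \<Rightarrow> 'k) set)"
  proof
    show "ker_delta1 V Ar s t Z \<subseteq> (ker_delta1 VB Ar sB tB ZB :: ('a \<times> ('v \<times> 'a list) \<Rightarrow> 'k) set)"
    proof
      fix f :: "'a \<times> ('v \<times> 'a list) \<Rightarrow> 'k" assume f: "f \<in> ker_delta1 V Ar s t Z"
      then have fq: "f \<in> QB_space V Ar s t Z" unfolding ker_delta1_def by blast
      then have "f \<in> QB_space VB Ar sB tB ZB" using pA_sub unfolding QB_space_def by blast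
      moreover have "delta1 VB Ar sB tB ZB f = (\<lambda>_. 0)" using delta_eq[OF fq] f unfolding ker_delta1_def by simp
      ultimately show "f \<in> ker_delta1 VB Ar sB tB ZB" unfolding ker_delta1_def by blast
    qed
    show "(ker_delta1 VB Ar sB tB ZB :: ('a \<times> ('v \<times> 'a list) \<Rightarrow> 'k) set) \<subseteq> ker_delta1 V Ar s t Z"
    proof
      fix f :: "'a \<times> ('v \<times> 'a list) \<Rightarrow> 'k" assume f: "f \<in> ker_delta1 VB Ar sB tB ZB"
      have fq: "f \<in> QB_space V Ar s t Z" unfolding QB_space_def
      proof (intro CollectI allI impI)
        fix x assume x: "x \<notin> pA"
        obtain c g where xe: "x = (c,g)" by (cases x)
        show "f x = 0"
        proof (cases "x \<in> pB")
          case True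
          then have "g = (e1,[]) \<and> s c = e1 \<and> t c = en \<and> c \<in> Ar" using pB_new x xe by blast
          then show ?thesis using L5[OF f _ _ _ not_exc] xe by auto
        next
          case False
          then show ?thesis using f unfolding ker_delta1_def QB_space_def by blast
        qed
      qed
      moreover have "delta1 V Ar s t Z f = (\<lambda>_. 0)" using delta_eq[OF fq] f unfolding ker_delta1_def by simp
      ultimately show "f \<in> ker_delta1 V Ar s t Z" unfolding ker_delta1_def by blast
    qed
  qed
  show ?thesis unfolding lie_isomorphic_def
  proof (intro exI[of _ id] conjI ballI allI)
    show "bij_betw id (ker_delta1 V Ar s t Z) (ker_delta1 VB Ar sB tB ZB :: ('a \<times> ('v \<times> 'a list) \<Rightarrow> 'k) set)"
      unfolding K by (rule bij_betw_id)
  next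
    fix x y :: "'a \<times> ('v \<times> 'a list) \<Rightarrow> 'k"
    assume x: "x \<in> ker_delta1 V Ar s t Z" and y: "y \<in> ker_delta1 V Ar s t Z"
    then have "x \<in> QB_space V Ar s t Z" "y \<in> QB_space V Ar s t Z" unfolding ker_delta1_def by auto
    then have "lie_br VB Ar sB tB ZB x y = lie_br V Ar s t Z x y" by (rule br_eq)
    then show "id (lie_br V Ar s t Z x y) = lie_br VB Ar sB tB ZB (id x) (id y)"
      by simp
  qed auto
qed

end
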